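(* For every $\mathbb{G}$-stopping time $R$, $$\{R<\tau\}\cap\mathcal{G}_R=\{R<\tau\}\cap(\mathcal{N}\vee\mathcal{F}_R).$$
   Context: Let $(\Omega,\mathcal{A},\mathbb{Q})$ be a probability space with a right-continuous filtration $\mathbb{F}=(\mathcal{F}_t)_{t\ge0}$ such that $\mathcal{F}_0$ contains $\mathcal{N}^{\mathcal{F}_\infty}$, where for a $\sigma$-algebra $\mathcal{T}\subset\mathcal{A}$, $\mathcal{N}^{\mathcal{T}}$ denotes the $\sigma$-algebra generated by all subsets of $\mathcal{T}$-measurable $\mathbb{Q}$-null sets. Let $\tau$ be a random variable with values in $[0,\infty]$, let $\mathcal{N}=\mathcal{N}^{\sigma(\tau)\vee\mathcal{F}_\infty}$, and let $\mathbb{G}=(\mathcal{G}_t)_{t\ge0}$ with $\mathcal{G}_t=\mathcal{N}\vee\bigcap_{s>t}(\mathcal{F}_s\vee\sigma(\tau\wedge s))$. For a random time $R$, $\mathcal{F}_R=\sigma\{X_R\mathbf{1}_{\{R<\infty\}}: X\ \mathbb{F}\text{-optional}\}$. For a set $D\subset\Omega$ and a $\sigma$-algebra $\mathcal{T}$, $D\cap\mathcal{T}=\{D\cap B: B\in\mathcal{T}\}$. *)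

theory Defs
  imports "HOL-Probability.Probability"
begin

definition sjoin :: "'a set \<Rightarrow> 'a set set \<Rightarrow> 'a set set \<Rightarrow> 'a set set" where
  "sjoin \<Omega> S T = sigma_sets \<Omega> (S \<union> T)"

definition sigma_rv :: "'a set \<Rightarrow> ('a \<Rightarrow> 'b::topological_space) \<Rightarrow> 'a set set" where
  "sigma_rv \<Omega> f = sigma_sets \<Omega> {f -` B \<inter> \<Omega> | B. B \<in> sets (borel :: 'b measure)}"

definition nullsigma :: "'a measure \<Rightarrow> 'a set set \<Rightarrow> 'a set set" where
  "nullsigma Q T = sigma_sets (space Q)
     {N. N \<subseteq> space Q \<and> (\<exists>B\<in>T. N \<subseteq> B \<and> B \<in> sets Q \<and> measure Q B = 0)}"

definition Finf :: "'a set \<Rightarrow> (real \<Rightarrow> 'a set set) \<Rightarrow> 'a set set" where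
  "Finf \<Omega> F = sigma_sets \<Omega> (\<Union>t\<in>{0..}. F t)"

definition trace_on :: "'a set \<Rightarrow> 'a set set \<Rightarrow> 'a set set" where
  "trace_on D T = (\<lambda>B. D \<inter> B) ` T"

definition is_filtration :: "'a measure \<Rightarrow> (real \<Rightarrow> 'a set set) \<Rightarrow> bool" where
  "is_filtration Q F \<longleftrightarrow>
     (\<forall>t\<ge>0. sigma_algebra (space Q) (F t) \<and> F t \<subseteq> sets Q) \<and>
     (\<forall>s t. 0 \<le> s \<longrightarrow> s \<le> t \<longrightarrow> F s \<subseteq> F t)"

definition right_continuous_filtration :: "(real \<Rightarrow> 'a set set) \<Rightarrow> bool" where
  "right_continuous_filtration F \<longleftrightarrow> (\<forall>t\<ge>0. F t = (\<Inter>s\<in>{t<..}. F s))"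

(* the progressively enlarged filtration G *)
definition Gfilt :: "'a measure \<Rightarrow> (real \<Rightarrow> 'a set set) \<Rightarrow> ('a \<Rightarrow> ennreal) \<Rightarrow> real \<Rightarrow> 'a set set" where
  "Gfilt Q F \<tau> t = sjoin (space Q)
      (nullsigma Q (sjoin (space Q) (sigma_rv (space Q) \<tau>) (Finf (space Q) F)))
      (\<Inter>s\<in>{t<..}. sjoin (space Q) (F s) (sigma_rv (space Q) (\<lambda>\<omega>. min (\<tau> \<omega>) (ennreal s))))"

definition is_stopping_time :: "'a set \<Rightarrow> (real \<Rightarrow> 'a set set) \<Rightarrow> ('a \<Rightarrow> ennreal) \<Rightarrow> bool" where
  "is_stopping_time \<Omega> H R \<longleftrightarrow> (\<forall>t\<ge>0. {\<omega>\<in>\<Omega>. R \<omega> \<le> ennreal t} \<in> H t)"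

definition cadlag :: "(real \<Rightarrow> real) \<Rightarrow> bool" where
  "cadlag f \<longleftrightarrow> (\<forall>t\<ge>0. (f \<longlongrightarrow> f t) (at_right t)) \<and>
                 (\<forall>t>0. \<exists>l. (f \<longlongrightarrow> l) (at_left t))"

definition adapted :: "'a set \<Rightarrow> (real \<Rightarrow> 'a set set) \<Rightarrow> (real \<Rightarrow> 'a \<Rightarrow> real) \<Rightarrow> bool" where
  "adapted \<Omega> H X \<longleftrightarrow> (\<forall>t\<ge>0. \<forall>B\<in>sets (borel :: real measure). {\<omega>\<in>\<Omega>. X t \<omega> \<in> B} \<in> H t)"

definition optional_sigma :: "'a set \<Rightarrow> (real \<Rightarrow> 'a set set) \<Rightarrow> (real \<times> 'a) set set" where
  "optional_sigma \<Omega> H = sigma_sets ({0..} \<times> \<Omega>)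
     {{(t, \<omega>) \<in> {0..} \<times> \<Omega>. X t \<omega> \<in> B} | X B.
        adapted \<Omega> H X \<and> (\<forall>\<omega>\<in>\<Omega>. cadlag (\<lambda>t. X t \<omega>)) \<and> B \<in> sets (borel :: real measure)}"

definition optional_process :: "'a set \<Rightarrow> (real \<Rightarrow> 'a set set) \<Rightarrow> (real \<Rightarrow> 'a \<Rightarrow> real) \<Rightarrow> bool" where
  "optional_process \<Omega> H Y \<longleftrightarrow>
     (\<forall>B\<in>sets (borel :: real measure). {(t, \<omega>) \<in> {0..} \<times> \<Omega>. Y t \<omega> \<in> B} \<in> optional_sigma \<Omega> H)"

definition sigma_at :: "'a set \<Rightarrow> (real \<Rightarrow> 'a set set) \<Rightarrow> ('a \<Rightarrow> ennreal) \<Rightarrow> 'a set set" where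
  "sigma_at \<Omega> H R = sigma_sets \<Omega>
     {{\<omega>\<in>\<Omega>. (if R \<omega> < \<infinity> then Y (enn2real (R \<omega>)) \<omega> else 0) \<in> B} | Y B.
        optional_process \<Omega> H Y \<and> B \<in> sets (borel :: real measure)}"

end

theory Submission
  imports Defs
begin


lemma sigma_sets_prop:
  assumes "C \<in> sigma_sets \<Omega> S" "\<And>C. C\<in>S \<Longrightarrow> P C" "P {}" "\<And>C. P C \<Longrightarrow> P (\<Omega> - C)"
    "\<And>A. (\<And>i::nat. P (A i)) \<Longrightarrow> P (\<Union>i. A i)"
  shows "P C"
  using assms(1) by (induct rule: sigma_sets.induct) (auto intro: assms)

locale setting =
  fixes Q :: "'a measure" and F :: "real \<Rightarrow> 'a set set" and \<tau> :: "'a \<Rightarrow> ennreal"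
  assumes prob: "prob_space Q"
    and filt: "is_filtration Q F"
    and rc: "right_continuous_filtration F"
begin

abbreviation "\<Omega> \<equiv> space Q"

definition "T = sjoin \<Omega> (sigma_rv \<Omega> \<tau>) (Finf \<Omega> F)"
definition "NS = {B. B \<in> T \<and> B \<in> sets Q \<and> measure Q B = 0}"

lemma F_sa: "t \<ge> 0 \<Longrightarrow> sigma_algebra \<Omega> (F t)"
  using filt unfolding is_filtration_def by auto
lemma F_sub: "t \<ge> 0 \<Longrightarrow> F t \<subseteq> sets Q"
  using filt unfolding is_filtration_def by auto
lemma F_mono: "0 \<le> s \<Longrightarrow> s \<le> t \<Longrightarrow> F s \<subseteq> F t"
  using filt unfolding is_filtration_def by auto

lemma rc_lemma:
  assumes "t \<ge> 0" "\<And>M::nat. E \<in> F (t + 1/(real M+1))"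
  shows "E \<in> F t"
proof -
  have "E \<in> F s" if "s > t" for s
  proof -
    have "\<exists>M. inverse (real (Suc M)) < s - t"
      using that by (intro reals_Archimedean) simp
    then obtain M :: nat where "inverse (real (Suc M)) < s - t" by blast
    then have "1/(real M+1) < s - t" by (simp add: inverse_eq_divide add.commute)
    then have "F (t + 1/(real M+1)) \<subseteq> F s"
      using assms(1) by (intro F_mono) auto
    then show ?thesis using assms(2) by auto
  qed
  moreover have "F t = (\<Inter>s\<in>{t<..}. F s)"
    using rc assms(1) unfolding right_continuous_filtration_def by blast
  ultimately show ?thesis by (simp only:) blast
qed

lemma sigma_rv_Pow: "sigma_rv \<Omega> f \<subseteq> Pow \<Omega>"
proof -
  have g1: "{f -` B \<inter> \<Omega> |B. B \<in> sets borel} \<subseteq> Pow \<Omega>" by blast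
  show ?thesis unfolding sigma_rv_def using sigma_sets_into_sp[OF g1] by blast
qed

lemma Finf_Pow: "Finf \<Omega> F \<subseteq> Pow \<Omega>"
proof -
  have g2: "(\<Union>t\<in>{0..}. F t) \<subseteq> Pow \<Omega>"
  proof
    fix x assume "x \<in> (\<Union>t\<in>{0..}. F t)"
    then obtain t where "t \<ge> 0" "x \<in> F t" by auto
    then have "x \<in> sets Q" using F_sub by blast
    then show "x \<in> Pow \<Omega>" using sets.sets_into_space by blast
  qed
  show ?thesis unfolding Finf_def using sigma_sets_into_sp[OF g2] by blast
qed

lemma T_sa: "sigma_algebra \<Omega> T"
  unfolding T_def sjoin_def
  by (rule sigma_algebra_sigma_sets) (use sigma_rv_Pow Finf_Pow in blast)

lemma T_empty: "{} \<in> T"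
  unfolding T_def sjoin_def by (rule sigma_sets.Empty)

lemma NS_empty: "{} \<in> NS"
  unfolding NS_def using T_empty by simp

lemma NS_measure0: "B \<in> NS \<Longrightarrow> emeasure Q B = 0"
proof -
  assume "B \<in> NS"
  then have "measure Q B = 0" unfolding NS_def by blast
  moreover have "emeasure Q B = ennreal (measure Q B)"
    using prob by (intro finite_measure.emeasure_eq_measure prob_space.axioms(1))
  ultimately show ?thesis by simp
qed

lemma NS_UN:
  assumes "countable I" "\<And>i. i \<in> I \<Longrightarrow> B i \<in> NS"
  shows "(\<Union>i\<in>I. B i) \<in> NS"
proof (cases "I = {}")
  case True then show ?thesis using NS_empty by simp
next
  case False
  let ?N = "\<lambda>n. B (from_nat_into I n)"
  have r: "range (from_nat_into I) = I" using range_from_nat_into[OF False assms(1)] .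
  have eq: "(\<Union>i\<in>I. B i) = (\<Union>n. ?N n)"
    by (subst r[symmetric]) (simp only: UN_simps image_comp o_def)
  have N: "?N n \<in> NS" for n using assms(2) from_nat_into[OF False] by blast
  have rT: "range ?N \<subseteq> T" using N unfolding NS_def by blast
  have rQ: "range ?N \<subseteq> sets Q" using N unfolding NS_def by blast
  have "(\<Union>n. ?N n) \<in> T" by (rule sigma_algebra.countable_nat_UN[OF T_sa rT])
  moreover have "(\<Union>n. ?N n) \<in> sets Q" by (rule sets.countable_nat_UN[OF rQ])
  moreover have "emeasure Q (\<Union>n. ?N n) = 0"
    by (rule emeasure_UN_eq_0[OF _ rQ]) (rule NS_measure0[OF N])
  then have "measure Q (\<Union>n. ?N n) = 0" by (simp add: measure_def)
  ultimately show ?thesis unfolding eq NS_def by blast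
qed

lemma jeulin_a:
  assumes s: "s \<ge> 0" and C: "C \<in> sjoin \<Omega> (F s) (sigma_rv \<Omega> (\<lambda>\<omega>. min (\<tau> \<omega>) (ennreal s)))"
  shows "\<exists>C'\<in>F s. \<forall>\<omega>\<in>\<Omega>. ennreal s < \<tau> \<omega> \<longrightarrow> (\<omega>\<in>C \<longleftrightarrow> \<omega>\<in>C')"
proof -
  interpret Fs: sigma_algebra \<Omega> "F s" using F_sa s .
  let ?P = "\<lambda>C. \<exists>C'\<in>F s. \<forall>\<omega>\<in>\<Omega>. ennreal s < \<tau> \<omega> \<longrightarrow> (\<omega>\<in>C \<longleftrightarrow> \<omega>\<in>C')"
  have emp: "?P {}" by (rule bexI[of _ "{}"]) auto
  have compl: "?P (\<Omega> - C)" if "?P C" for C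
  proof -
    from that obtain C' where "C' \<in> F s" "\<forall>\<omega>\<in>\<Omega>. ennreal s < \<tau> \<omega> \<longrightarrow> (\<omega>\<in>C \<longleftrightarrow> \<omega>\<in>C')" by blast
    then show ?thesis by (intro bexI[of _ "\<Omega> - C'"]) auto
  qed
  have un: "?P (\<Union>i. A i)" if "\<And>i::nat. ?P (A i)" for A
  proof -
    from that obtain f where f: "\<And>i. f i \<in> F s" "\<And>i. \<forall>\<omega>\<in>\<Omega>. ennreal s < \<tau> \<omega> \<longrightarrow> (\<omega>\<in>A i \<longleftrightarrow> \<omega>\<in>f i)"
      by metis
    then show ?thesis by (intro bexI[of _ "\<Union>i. f i"]) auto
  qed
  have rv: "?P C" if "C \<in> sigma_rv \<Omega> (\<lambda>\<omega>. min (\<tau> \<omega>) (ennreal s))" for C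
    using that unfolding sigma_rv_def
  proof (rule sigma_sets_prop[where P = ?P])
    fix C assume "C \<in> {(\<lambda>\<omega>. min (\<tau> \<omega>) (ennreal s)) -` B \<inter> \<Omega> |B. B \<in> sets borel}"
    then obtain B where B: "C = (\<lambda>\<omega>. min (\<tau> \<omega>) (ennreal s)) -` B \<inter> \<Omega>" by auto
    show "?P C"
    proof (cases "ennreal s \<in> B")
      case True then show ?thesis unfolding B
        by (intro bexI[of _ \<Omega>]) (auto simp: min_def)
    next
      case False then show ?thesis unfolding B
        by (intro bexI[of _ "{}"]) (auto simp: min_def)
    qed
  qed (use emp compl un in auto)
  show ?thesis using C unfolding sjoin_def
    by (rule sigma_sets_prop[where P = ?P]) (use emp compl un rv in auto)
qed


lemma ev_less:
  assumes "t \<ge> 0" "ennreal t < x"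
  shows "\<exists>M. \<forall>m\<ge>M. ennreal (t + 1/(real m+1)) < x"
proof (cases x)
  case top then show ?thesis by auto
next
  case (real y)
  then have ty: "t < y" using assms ennreal_less_iff by auto
  have "\<exists>M. inverse (real (Suc M)) < y - t"
    using ty by (intro reals_Archimedean) simp
  then obtain M :: nat where M: "inverse (real (Suc M)) < y - t" by blast
  have "ennreal (t + 1/(real m+1)) < x" if "m \<ge> M" for m
  proof -
    have "1/(real m+1) \<le> 1/(real M+1)" using that by (intro divide_left_mono) auto
    also have "\<dots> < y - t" using M by (simp add: inverse_eq_divide add.commute)
    finally have "t + 1/(real m+1) < y" by simp
    then show ?thesis unfolding real using ty assms(1) by (intro ennreal_lessI) auto
  qed
  then show ?thesis by blast
qed

lemma jeulin_b:
  assumes t: "t \<ge> 0"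
    and C: "C \<in> (\<Inter>s\<in>{t<..}. sjoin \<Omega> (F s) (sigma_rv \<Omega> (\<lambda>\<omega>. min (\<tau> \<omega>) (ennreal s))))"
  shows "\<exists>C'\<in>F t. \<forall>\<omega>\<in>\<Omega>. ennreal t < \<tau> \<omega> \<longrightarrow> (\<omega>\<in>C \<longleftrightarrow> \<omega>\<in>C')"
proof -
  define s where "s m = t + 1/(real m+1)" for m :: nat
  have s_gt: "s m > t" for m unfolding s_def by simp
  have s_ge: "s m \<ge> 0" for m using s_gt[of m] t by simp
  have s_mono: "m \<ge> K \<Longrightarrow> s m \<le> s K" for m K
    unfolding s_def by (simp add: divide_left_mono)
  have "\<forall>m. \<exists>C'\<in>F (s m). \<forall>\<omega>\<in>\<Omega>. ennreal (s m) < \<tau> \<omega> \<longrightarrow> (\<omega>\<in>C \<longleftrightarrow> \<omega>\<in>C')"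
  proof
    fix m
    have "C \<in> sjoin \<Omega> (F (s m)) (sigma_rv \<Omega> (\<lambda>\<omega>. min (\<tau> \<omega>) (ennreal (s m))))"
      using C s_gt[of m] by blast
    then show "\<exists>C'\<in>F (s m). \<forall>\<omega>\<in>\<Omega>. ennreal (s m) < \<tau> \<omega> \<longrightarrow> (\<omega>\<in>C \<longleftrightarrow> \<omega>\<in>C')"
      by (rule jeulin_a[OF s_ge])
  qed
  then obtain f where f: "\<And>m. f m \<in> F (s m)"
    "\<And>m. \<forall>\<omega>\<in>\<Omega>. ennreal (s m) < \<tau> \<omega> \<longrightarrow> (\<omega>\<in>C \<longleftrightarrow> \<omega>\<in>f m)"
    by metis
  define C' where "C' = (\<Union>M. \<Inter>m\<in>{M..}. f m)"
  have "C' \<in> F t"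
  proof (rule rc_lemma[OF t])
    fix K :: nat
    interpret Fk: sigma_algebra \<Omega> "F (t + 1/(real K+1))" using F_sa t by simp
    have eq: "C' = (\<Union>M\<in>{K..}. \<Inter>m\<in>{M..}. f m)"
    proof
      show "C' \<subseteq> (\<Union>M\<in>{K..}. \<Inter>m\<in>{M..}. f m)"
      proof
        fix x assume "x \<in> C'"
        then obtain M where "\<forall>m\<ge>M. x \<in> f m" unfolding C'_def by auto
        then have "max M K \<in> {K..} \<and> x \<in> (\<Inter>m\<in>{max M K..}. f m)" by auto
        then show "x \<in> (\<Union>M\<in>{K..}. \<Inter>m\<in>{M..}. f m)" by blast
      qed
    qed (auto simp: C'_def)
    have "(\<Inter>m\<in>{M..}. f m) \<in> F (t + 1/(real K+1))" if "M \<ge> K" for M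
    proof (rule Fk.countable_INT')
      show "f ` {M..} \<subseteq> F (t + 1/(real K+1))"
      proof
        fix x assume "x \<in> f ` {M..}"
        then obtain m where "m \<ge> M" "x = f m" by auto
        moreover have "F (s m) \<subseteq> F (s K)" using s_ge s_mono \<open>m \<ge> M\<close> that by (intro F_mono) auto
        ultimately show "x \<in> F (t + 1/(real K+1))" using f(1) unfolding s_def by blast
      qed
    qed auto
    then show "C' \<in> F (t + 1/(real K+1))" unfolding eq by (intro Fk.countable_UN'') auto
  qed
  moreover have "\<forall>\<omega>\<in>\<Omega>. ennreal t < \<tau> \<omega> \<longrightarrow> (\<omega>\<in>C \<longleftrightarrow> \<omega>\<in>C')"
  proof (intro ballI impI)
    fix \<omega> assume w: "\<omega> \<in> \<Omega>" "ennreal t < \<tau> \<omega>"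
    obtain M0 where M0: "\<And>m. m \<ge> M0 \<Longrightarrow> ennreal (s m) < \<tau> \<omega>"
      using ev_less[OF t w(2)] unfolding s_def by blast
    have eqv: "m \<ge> M0 \<Longrightarrow> (\<omega>\<in>C \<longleftrightarrow> \<omega>\<in>f m)" for m using f(2) M0 w(1) by blast
    show "\<omega>\<in>C \<longleftrightarrow> \<omega>\<in>C'"
    proof
      assume "\<omega> \<in> C"
      then have "\<omega> \<in> (\<Inter>m\<in>{M0..}. f m)" using eqv by auto
      then show "\<omega> \<in> C'" unfolding C'_def by blast
    next
      assume "\<omega> \<in> C'"
      then obtain M where "\<forall>m\<ge>M. \<omega> \<in> f m" unfolding C'_def by auto
      then have "\<omega> \<in> f (max M M0)" by auto
      then show "\<omega> \<in> C" using eqv[of "max M M0"] by auto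
    qed
  qed
  ultimately show ?thesis by blast
qed


definition "JP t C \<longleftrightarrow> (\<exists>C'\<in>F t. \<exists>B\<in>NS. \<forall>\<omega>\<in>\<Omega>. ennreal t < \<tau> \<omega> \<longrightarrow> \<omega> \<notin> B \<longrightarrow> (\<omega>\<in>C \<longleftrightarrow> \<omega>\<in>C'))"

lemma JP_sigma:
  assumes t: "t \<ge> 0" and gen: "\<And>C. C \<in> S \<Longrightarrow> JP t C" and C: "C \<in> sigma_sets \<Omega> S"
  shows "JP t C"
proof -
  interpret Ft: sigma_algebra \<Omega> "F t" using F_sa t by simp
  show ?thesis using C
  proof (rule sigma_sets_prop[where P = "JP t"])
    show "JP t {}" unfolding JP_def using NS_empty by blast
  next
    fix C assume "JP t C"
    then obtain C' B where "C' \<in> F t" "B \<in> NS"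
      "\<forall>\<omega>\<in>\<Omega>. ennreal t < \<tau> \<omega> \<longrightarrow> \<omega> \<notin> B \<longrightarrow> (\<omega>\<in>C \<longleftrightarrow> \<omega>\<in>C')"
      unfolding JP_def by blast
    then show "JP t (\<Omega> - C)" unfolding JP_def
      by (intro bexI[of _ "\<Omega> - C'"] bexI[of _ B]) auto
  next
    fix A :: "nat \<Rightarrow> 'a set" assume "\<And>i. JP t (A i)"
    then obtain f g where fg: "\<And>i. f i \<in> F t" "\<And>i. g i \<in> NS"
      "\<And>i. \<forall>\<omega>\<in>\<Omega>. ennreal t < \<tau> \<omega> \<longrightarrow> \<omega> \<notin> g i \<longrightarrow> (\<omega>\<in>A i \<longleftrightarrow> \<omega>\<in>f i)"
      unfolding JP_def by metis
    have "(\<Union>i. f i) \<in> F t" using fg(1) by blast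
    moreover have "(\<Union>i\<in>UNIV. g i) \<in> NS" using fg(2) by (intro NS_UN) auto
    ultimately show "JP t (\<Union>i. A i)" unfolding JP_def
      by (intro bexI[of _ "\<Union>i. f i"] bexI[of _ "\<Union>i. g i"]) (use fg(3) in auto)
  qed (rule gen)
qed

lemma Gfilt_eq: "Gfilt Q F \<tau> t = sigma_sets \<Omega> (nullsigma Q T \<union>
   (\<Inter>s\<in>{t<..}. sjoin \<Omega> (F s) (sigma_rv \<Omega> (\<lambda>\<omega>. min (\<tau> \<omega>) (ennreal s)))))"
  unfolding Gfilt_def T_def by (rule sjoin_def)

lemma jeulin:
  assumes t: "t \<ge> 0" and C: "C \<in> Gfilt Q F \<tau> t"
  shows "JP t C"
proof -
  interpret Ft: sigma_algebra \<Omega> "F t" using F_sa t by simp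
  have ns: "JP t C" if "C \<in> nullsigma Q T" for C
    using t _ that[unfolded nullsigma_def]
  proof (rule JP_sigma)
    fix C assume "C \<in> {N. N \<subseteq> \<Omega> \<and> (\<exists>B\<in>T. N \<subseteq> B \<and> B \<in> sets Q \<and> measure Q B = 0)}"
    then obtain B where "B \<in> NS" "C \<subseteq> B" unfolding NS_def by blast
    then show "JP t C" unfolding JP_def using Ft.empty_sets by (intro bexI[of _ "{}"] bexI[of _ B]) auto
  qed
  show ?thesis using t _ C[unfolded Gfilt_eq]
  proof (rule JP_sigma)
    fix C assume "C \<in> nullsigma Q T \<union>
      (\<Inter>s\<in>{t<..}. sjoin \<Omega> (F s) (sigma_rv \<Omega> (\<lambda>\<omega>. min (\<tau> \<omega>) (ennreal s))))"
    then show "JP t C"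
    proof
      assume "C \<in> nullsigma Q T" then show ?thesis by (rule ns)
    next
      assume "C \<in> (\<Inter>s\<in>{t<..}. sjoin \<Omega> (F s) (sigma_rv \<Omega> (\<lambda>\<omega>. min (\<tau> \<omega>) (ennreal s))))"
      from jeulin_b[OF t this] show ?thesis unfolding JP_def using NS_empty by blast
    qed
  qed
qed

end


lemma enn_gap:
  assumes "ennreal x < w"
  shows "\<exists>c>x. \<forall>s. s < c \<longrightarrow> ennreal s < w"
proof (cases w)
  case top then show ?thesis by (intro exI[of _ "x+1"]) auto
next
  case (real z)
  have "x < z"
  proof (rule ccontr)
    assume "\<not> x < z" then have "z \<le> x" by simp
    then have "ennreal z \<le> ennreal x" by (rule ennreal_leI)
    then show False using assms real by simp
  qed
  moreover have "0 < z"
  proof (rule ccontr)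
    assume "\<not> 0 < z" then have "z = 0" using real by simp
    then show False using assms real by simp
  qed
  ultimately show ?thesis using real by (intro exI[of _ z]) (auto intro: ennreal_lessI)
qed

lemma cadlag_step: "cadlag (\<lambda>t. if a \<le> ennreal t then (c::real) else 0)"
  unfolding cadlag_def
proof (intro conjI allI impI)
  fix t :: real assume t: "t \<ge> 0"
  let ?f = "\<lambda>t. if a \<le> ennreal t then (c::real) else 0"
  show "(?f \<longlongrightarrow> ?f t) (at_right t)"
  proof (rule tendsto_eventually)
    show "\<forall>\<^sub>F s in at_right t. ?f s = ?f t"
    proof (cases "a \<le> ennreal t")
      case True
      show ?thesis
      proof (rule eventually_at_rightI[of t "t+1"])
        fix s assume "s \<in> {t<..<t+1}"
        then have "ennreal t \<le> ennreal s" by (intro ennreal_leI) auto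
        then show "?f s = ?f t" using True by auto
      qed simp
    next
      case False
      then obtain b where b: "b > t" "\<And>s. s < b \<Longrightarrow> ennreal s < a"
        using enn_gap[of t a] by (auto simp: not_le)
      show ?thesis
      proof (rule eventually_at_rightI[of t b])
        fix s assume "s \<in> {t<..<b}"
        then have "ennreal s < a" using b by auto
        then show "?f s = ?f t" using False by auto
      qed (use b in simp)
    qed
  qed
next
  fix t :: real assume t: "t > 0"
  let ?f = "\<lambda>t. if a \<le> ennreal t then (c::real) else 0"
  show "\<exists>l. (?f \<longlongrightarrow> l) (at_left t)"
  proof (cases "a < ennreal t")
    case True
    then obtain x where x: "0 \<le> x" "a = ennreal x" by (cases a) auto
    have "x < t" using True x ennreal_less_iff by auto
    have "\<forall>\<^sub>F s in at_left t. ?f s = c"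
    proof (rule eventually_at_leftI[of x])
      fix s assume "s \<in> {x<..<t}"
      then have "a \<le> ennreal s" unfolding x by (intro ennreal_leI) auto
      then show "?f s = c" by simp
    qed fact
    then show ?thesis by (intro exI[of _ c] tendsto_eventually)
  next
    case False
    have "\<forall>\<^sub>F s in at_left t. ?f s = 0"
    proof (rule eventually_at_leftI[of "t - 1"])
      fix s assume "s \<in> {t - 1<..<t}"
      then have "ennreal s < ennreal t" using t by (intro ennreal_lessI) auto
      then show "?f s = 0" using False by auto
    qed simp
    then show ?thesis by (intro exI[of _ 0] tendsto_eventually)
  qed
qed


lemma rc_char:
  fixes g :: "real \<Rightarrow> real" and P :: "real \<Rightarrow> real \<Rightarrow> bool"
  assumes gr: "(g \<longlongrightarrow> g x) (at_right x)" and x: "ennreal x < w"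
    and J: "\<And>q r. q\<in>\<rat> \<Longrightarrow> r\<in>\<rat> \<Longrightarrow> x < q \<Longrightarrow> ennreal q < w \<Longrightarrow> (P q r \<longleftrightarrow> g q < r)"
  shows "g x < a \<longleftrightarrow> (\<exists>r\<in>\<rat>. r < a \<and> (\<exists>M::nat. \<forall>q\<in>\<rat>. x < q \<longrightarrow> q < x + 1/(real M+1) \<longrightarrow> P q r))"
proof -
  obtain c where c: "c > x" "\<And>s. s < c \<Longrightarrow> ennreal s < w"
    using enn_gap[OF x] by blast
  show ?thesis
  proof
    assume "g x < a"
    then obtain r where r: "r \<in> \<rat>" "g x < r" "r < a" using Rats_dense_in_real by blast
    have "\<forall>\<^sub>F s in at_right x. g s < r" by (rule order_tendstoD(2)[OF gr r(2)])
    then obtain b where b: "b > x" "\<And>s. s > x \<Longrightarrow> s < b \<Longrightarrow> g s < r"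
      unfolding eventually_at_right_field by blast
    have "\<exists>M. inverse (real (Suc M)) < min b c - x"
      using b c by (intro reals_Archimedean) simp
    then obtain M :: nat where M: "inverse (real (Suc M)) < min b c - x" by blast
    then have M': "1/(real M+1) < min b c - x" by (simp add: inverse_eq_divide add.commute)
    have "\<forall>q\<in>\<rat>. x < q \<longrightarrow> q < x + 1/(real M+1) \<longrightarrow> P q r"
    proof (intro ballI impI)
      fix q assume q: "q \<in> \<rat>" "x < q" "q < x + 1/(real M+1)"
      then have "q < b" "q < c" using M' by auto
      then show "P q r" using J[OF q(1) r(1) q(2) c(2)] b(2)[OF q(2)] by blast
    qed
    then show "\<exists>r\<in>\<rat>. r < a \<and> (\<exists>M::nat. \<forall>q\<in>\<rat>. x < q \<longrightarrow> q < x + 1/(real M+1) \<longrightarrow> P q r)"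
      using r by blast
  next
    assume "\<exists>r\<in>\<rat>. r < a \<and> (\<exists>M::nat. \<forall>q\<in>\<rat>. x < q \<longrightarrow> q < x + 1/(real M+1) \<longrightarrow> P q r)"
    then obtain r M where r: "r \<in> \<rat>" "r < a" and
      M: "\<forall>q\<in>\<rat>. x < q \<longrightarrow> q < x + 1/(real M+1) \<longrightarrow> P q r" by blast
    have "g x \<le> r"
    proof (rule ccontr)
      assume "\<not> g x \<le> r"
      then have "r < g x" by simp
      have "\<forall>\<^sub>F s in at_right x. r < g s" by (rule order_tendstoD(1)[OF gr \<open>r < g x\<close>])
      then obtain b where b: "b > x" "\<And>s. s > x \<Longrightarrow> s < b \<Longrightarrow> r < g s"
        unfolding eventually_at_right_field by blast
      have "x < min (min b c) (x + 1/(real M+1))" using b c by simp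
      then obtain q where q: "q \<in> \<rat>" "x < q" "q < min (min b c) (x + 1/(real M+1))"
        using Rats_dense_in_real by blast
      then have "P q r" using M by simp
      moreover have "ennreal q < w" using q c by simp
      ultimately have "g q < r" using J[OF q(1) r(1) q(2)] by blast
      moreover have "r < g q" using b q by simp
      ultimately show False by simp
    qed
    then show "g x < a" using r by simp
  qed
qed



context setting
begin

definition "jC t C = (SOME C'. \<exists>B. C' \<in> F t \<and> B \<in> NS \<and>
   (\<forall>\<omega>\<in>\<Omega>. ennreal t < \<tau> \<omega> \<longrightarrow> \<omega> \<notin> B \<longrightarrow> (\<omega>\<in>C \<longleftrightarrow> \<omega>\<in>C')))"
definition "jB t C = (SOME B. B \<in> NS \<and>
   (\<forall>\<omega>\<in>\<Omega>. ennreal t < \<tau> \<omega> \<longrightarrow> \<omega> \<notin> B \<longrightarrow> (\<omega>\<in>C \<longleftrightarrow> \<omega>\<in>jC t C)))"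

lemma jCB:
  assumes "t \<ge> 0" "C \<in> Gfilt Q F \<tau> t"
  shows "jC t C \<in> F t" "jB t C \<in> NS"
    "\<And>\<omega>. \<omega>\<in>\<Omega> \<Longrightarrow> ennreal t < \<tau> \<omega> \<Longrightarrow> \<omega> \<notin> jB t C \<Longrightarrow> (\<omega>\<in>C \<longleftrightarrow> \<omega>\<in>jC t C)"
proof -
  have "\<exists>C'. \<exists>B. C' \<in> F t \<and> B \<in> NS \<and>
   (\<forall>\<omega>\<in>\<Omega>. ennreal t < \<tau> \<omega> \<longrightarrow> \<omega> \<notin> B \<longrightarrow> (\<omega>\<in>C \<longleftrightarrow> \<omega>\<in>C'))"
    using jeulin[OF assms] unfolding JP_def by blast
  then have 1: "\<exists>B. jC t C \<in> F t \<and> B \<in> NS \<and>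
   (\<forall>\<omega>\<in>\<Omega>. ennreal t < \<tau> \<omega> \<longrightarrow> \<omega> \<notin> B \<longrightarrow> (\<omega>\<in>C \<longleftrightarrow> \<omega>\<in>jC t C))"
    unfolding jC_def by (rule someI_ex)
  then show "jC t C \<in> F t" by blast
  from 1 have "\<exists>B. B \<in> NS \<and>
   (\<forall>\<omega>\<in>\<Omega>. ennreal t < \<tau> \<omega> \<longrightarrow> \<omega> \<notin> B \<longrightarrow> (\<omega>\<in>C \<longleftrightarrow> \<omega>\<in>jC t C))" by blast
  then have 2: "jB t C \<in> NS \<and>
   (\<forall>\<omega>\<in>\<Omega>. ennreal t < \<tau> \<omega> \<longrightarrow> \<omega> \<notin> jB t C \<longrightarrow> (\<omega>\<in>C \<longleftrightarrow> \<omega>\<in>jC t C))"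
    unfolding jB_def by (rule someI_ex)
  then show "jB t C \<in> NS" by blast
  fix \<omega> assume "\<omega>\<in>\<Omega>" "ennreal t < \<tau> \<omega>" "\<omega> \<notin> jB t C"
  then show "\<omega>\<in>C \<longleftrightarrow> \<omega>\<in>jC t C" using 2 by blast
qed

lemma F_Pow: "t \<ge> 0 \<Longrightarrow> C \<in> F t \<Longrightarrow> C \<subseteq> \<Omega>"
  using F_sub sets.sets_into_space by blast

end

locale setting2 = setting +
  fixes R :: "'a \<Rightarrow> ennreal"
  assumes stopR: "is_stopping_time (space Q) (Gfilt Q F \<tau>) R"
begin

definition "Q0 = {q::real. q \<in> \<rat> \<and> 0 \<le> q}"
definition "CR q = jC q {\<omega>\<in>\<Omega>. R \<omega> \<le> ennreal q}"
definition "BR q = jB q {\<omega>\<in>\<Omega>. R \<omega> \<le> ennreal q}"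
definition "Rp \<omega> = Inf {ennreal q | q. q \<in> Q0 \<and> \<omega> \<in> CR q}"

lemma Q0_countable: "countable Q0"
  unfolding Q0_def by (rule countable_subset[OF _ countable_rat]) auto

lemma CR:
  assumes "q \<ge> 0"
  shows "CR q \<in> F q" "BR q \<in> NS"
    "\<And>\<omega>. \<omega>\<in>\<Omega> \<Longrightarrow> ennreal q < \<tau> \<omega> \<Longrightarrow> \<omega> \<notin> BR q \<Longrightarrow> (R \<omega> \<le> ennreal q \<longleftrightarrow> \<omega>\<in>CR q)"
proof -
  have G: "{\<omega>\<in>\<Omega>. R \<omega> \<le> ennreal q} \<in> Gfilt Q F \<tau> q"
    using stopR assms unfolding is_stopping_time_def by blast
  show "CR q \<in> F q" "BR q \<in> NS" unfolding CR_def BR_def using jCB[OF assms G] by blast+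
  fix \<omega> assume "\<omega>\<in>\<Omega>" "ennreal q < \<tau> \<omega>" "\<omega> \<notin> BR q"
  then show "R \<omega> \<le> ennreal q \<longleftrightarrow> \<omega>\<in>CR q" using jCB(3)[OF assms G] unfolding CR_def BR_def by blast
qed

lemma Rp_less: "s \<ge> 0 \<Longrightarrow> {\<omega>\<in>\<Omega>. Rp \<omega> < ennreal s} \<in> F s"
proof -
  assume s: "s \<ge> 0"
  interpret Fs: sigma_algebra \<Omega> "F s" using F_sa s by simp
  have eq: "{\<omega>\<in>\<Omega>. Rp \<omega> < ennreal s} = (\<Union>q\<in>{q\<in>Q0. q < s}. CR q)"
  proof (intro set_eqI iffI)
    fix \<omega> assume "\<omega> \<in> {\<omega>\<in>\<Omega>. Rp \<omega> < ennreal s}"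
    then obtain q where "q \<in> Q0" "\<omega> \<in> CR q" "ennreal q < ennreal s"
      unfolding Rp_def Inf_less_iff by blast
    moreover then have "q < s" using ennreal_less_iff Q0_def by auto
    ultimately show "\<omega> \<in> (\<Union>q\<in>{q\<in>Q0. q < s}. CR q)" by blast
  next
    fix \<omega> assume "\<omega> \<in> (\<Union>q\<in>{q\<in>Q0. q < s}. CR q)"
    then obtain q where q: "q \<in> Q0" "q < s" "\<omega> \<in> CR q" by blast
    then have "\<omega> \<in> \<Omega>" using F_Pow CR(1) Q0_def by blast
    moreover have "ennreal q < ennreal s" using q unfolding Q0_def by (intro ennreal_lessI) auto
    ultimately show "\<omega> \<in> {\<omega>\<in>\<Omega>. Rp \<omega> < ennreal s}"
      unfolding Rp_def Inf_less_iff using q by blast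
  qed
  have "CR q \<in> F s" if "q \<in> Q0" "q < s" for q
    using CR(1)[of q] F_mono[of q s] that Q0_def by auto
  then show ?thesis unfolding eq
    by (intro Fs.countable_UN'') (auto intro: countable_subset[OF _ Q0_countable])
qed

lemma Rp_le: "t \<ge> 0 \<Longrightarrow> {\<omega>\<in>\<Omega>. Rp \<omega> \<le> ennreal t} \<in> F t"
proof -
  assume t: "t \<ge> 0"
  show ?thesis
  proof (rule rc_lemma[OF t])
    fix K :: nat
    interpret Fk: sigma_algebra \<Omega> "F (t + 1/(real K+1))" using F_sa t by simp
    have eq: "{\<omega>\<in>\<Omega>. Rp \<omega> \<le> ennreal t} = (\<Inter>m\<in>{K..}. {\<omega>\<in>\<Omega>. Rp \<omega> < ennreal (t + 1/(real m+1))})"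
    proof (intro set_eqI iffI)
      fix \<omega> assume w: "\<omega> \<in> {\<omega>\<in>\<Omega>. Rp \<omega> \<le> ennreal t}"
      have "ennreal t < ennreal (t + 1/(real m+1))" for m :: nat
        using t by (intro ennreal_lessI) (auto intro: add_nonneg_pos)
      then show "\<omega> \<in> (\<Inter>m\<in>{K..}. {\<omega>\<in>\<Omega>. Rp \<omega> < ennreal (t + 1/(real m+1))})"
        using w by (auto intro: le_less_trans)
    next
      fix \<omega> assume w: "\<omega> \<in> (\<Inter>m\<in>{K..}. {\<omega>\<in>\<Omega>. Rp \<omega> < ennreal (t + 1/(real m+1))})"
      have "Rp \<omega> \<le> ennreal t"
      proof (rule ccontr)
        assume "\<not> Rp \<omega> \<le> ennreal t"
        then have "ennreal t < Rp \<omega>" by simp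
        then obtain M where "\<forall>m\<ge>M. ennreal (t + 1/(real m+1)) < Rp \<omega>" using ev_less[OF t] by blast
        then have "ennreal (t + 1/(real (max M K)+1)) < Rp \<omega>" by simp
        moreover have "Rp \<omega> < ennreal (t + 1/(real (max M K)+1))" using w by simp
        ultimately show False by simp
      qed
      then show "\<omega> \<in> {\<omega>\<in>\<Omega>. Rp \<omega> \<le> ennreal t}" using w by auto
    qed
    have "{\<omega>\<in>\<Omega>. Rp \<omega> < ennreal (t + 1/(real m+1))} \<in> F (t + 1/(real K+1))" if "m \<ge> K" for m
    proof -
      have "F (t + 1/(real m+1)) \<subseteq> F (t + 1/(real K+1))"
        using t that by (intro F_mono) (auto simp: divide_left_mono)
      moreover have "{\<omega>\<in>\<Omega>. Rp \<omega> < ennreal (t + 1/(real m+1))} \<in> F (t + 1/(real m+1))"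
        using t by (intro Rp_less) simp
      ultimately show ?thesis by blast
    qed
    then show "{\<omega>\<in>\<Omega>. Rp \<omega> \<le> ennreal t} \<in> F (t + 1/(real K+1))"
      unfolding eq by (intro Fk.countable_INT') auto
  qed
qed


lemma Rp_eq:
  assumes w: "\<omega> \<in> \<Omega>" "R \<omega> < \<tau> \<omega>" "\<And>q. q \<in> Q0 \<Longrightarrow> \<omega> \<notin> BR q"
  shows "Rp \<omega> = R \<omega>"
proof (rule antisym)
  show "R \<omega> \<le> Rp \<omega>" unfolding Rp_def
  proof (rule Inf_greatest)
    fix y assume "y \<in> {ennreal q | q. q \<in> Q0 \<and> \<omega> \<in> CR q}"
    then obtain q where q: "y = ennreal q" "q \<in> Q0" "\<omega> \<in> CR q" by blast
    show "R \<omega> \<le> y"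
    proof (cases "ennreal q < \<tau> \<omega>")
      case True
      then show ?thesis using CR(3)[of q \<omega>] q w unfolding Q0_def by auto
    next
      case False
      then show ?thesis using w(2) q(1) by simp
    qed
  qed
next
  show "Rp \<omega> \<le> R \<omega>"
  proof (rule ccontr)
    assume "\<not> Rp \<omega> \<le> R \<omega>"
    then have lt: "R \<omega> < Rp \<omega>" by simp
    obtain x where x: "0 \<le> x" "R \<omega> = ennreal x" using w(2) by (cases "R \<omega>") auto
    have "ennreal x < min (Rp \<omega>) (\<tau> \<omega>)" using lt w(2) x by simp
    then obtain c where c: "c > x" "\<And>s. s < c \<Longrightarrow> ennreal s < min (Rp \<omega>) (\<tau> \<omega>)"
      using enn_gap by blast
    obtain q where q: "q \<in> \<rat>" "x < q" "q < c" using Rats_dense_in_real[OF c(1)] by blast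
    have qQ: "q \<in> Q0" using q x unfolding Q0_def by simp
    have qt: "ennreal q < \<tau> \<omega>" "ennreal q < Rp \<omega>" using c(2)[OF q(3)] by auto
    have "R \<omega> \<le> ennreal q" using x q by (simp add: ennreal_leI)
    then have "\<omega> \<in> CR q" using CR(3)[of q \<omega>] qQ w qt unfolding Q0_def by auto
    then have "Rp \<omega> \<le> ennreal q" unfolding Rp_def using qQ by (intro Inf_lower) blast
    then show False using qt by simp
  qed
qed


definition "Dset = {\<omega>\<in>\<Omega>. R \<omega> < \<tau> \<omega>}"
definition "H = sjoin \<Omega> (nullsigma Q T) (sigma_at \<Omega> F R)"

lemma NS_Un: "A \<in> NS \<Longrightarrow> B \<in> NS \<Longrightarrow> A \<union> B \<in> NS"
proof -
  assume "A \<in> NS" "B \<in> NS"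
  then have "(\<Union>b\<in>UNIV. if b then A else B) \<in> NS" by (intro NS_UN) auto
  moreover have "(\<Union>b\<in>UNIV. if b then A else B) = A \<union> B" by (auto split: if_splits)
  ultimately show ?thesis by simp
qed

lemma nullsigma_Pow: "nullsigma Q T \<subseteq> Pow \<Omega>"
proof -
  have g: "{N. N \<subseteq> \<Omega> \<and> (\<exists>B\<in>T. N \<subseteq> B \<and> B \<in> sets Q \<and> measure Q B = 0)} \<subseteq> Pow \<Omega>" by blast
  show ?thesis unfolding nullsigma_def using sigma_sets_into_sp[OF g] by blast
qed

lemma sigma_at_Pow: "sigma_at \<Omega> G S \<subseteq> Pow \<Omega>"
proof -
  have g: "{{\<omega>\<in>\<Omega>. (if S \<omega> < \<infinity> then Y (enn2real (S \<omega>)) \<omega> else 0) \<in> B} | Y B.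
        optional_process \<Omega> G Y \<and> B \<in> sets (borel :: real measure)} \<subseteq> Pow \<Omega>" by blast
  show ?thesis unfolding sigma_at_def using sigma_sets_into_sp[OF g] by blast
qed

lemma H_sa: "sigma_algebra \<Omega> H"
  unfolding H_def sjoin_def
  by (rule sigma_algebra_sigma_sets) (use nullsigma_Pow sigma_at_Pow in blast)

lemma NS_in_nullsigma: "B \<in> NS \<Longrightarrow> N \<subseteq> B \<Longrightarrow> N \<in> nullsigma Q T"
proof -
  assume "B \<in> NS" "N \<subseteq> B"
  moreover then have "B \<subseteq> \<Omega>" unfolding NS_def using sets.sets_into_space by blast
  ultimately show ?thesis unfolding nullsigma_def NS_def by (intro sigma_sets.Basic) blast
qed

lemma core:
  fixes X :: "real \<Rightarrow> 'a \<Rightarrow> real" and a :: real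
  assumes adX: "adapted \<Omega> (Gfilt Q F \<tau>) X" and cX: "\<forall>\<omega>\<in>\<Omega>. cadlag (\<lambda>t. X t \<omega>)"
  shows "\<exists>A'\<in>H. Dset \<inter> {\<omega>\<in>\<Omega>. R \<omega> < \<infinity> \<and> X (enn2real (R \<omega>)) \<omega> \<in> {..<a}} = Dset \<inter> A'"
proof -
  define Cx where "Cx q r = jC q {\<omega>\<in>\<Omega>. X q \<omega> \<in> {..<r}}" for q r
  define Bx where "Bx q r = jB q {\<omega>\<in>\<Omega>. X q \<omega> \<in> {..<r}}" for q r
  have Gx: "{\<omega>\<in>\<Omega>. X q \<omega> \<in> {..<r}} \<in> Gfilt Q F \<tau> q" if "q \<ge> 0" for q r
    using adX that lessThan_borel[of r] unfolding adapted_def by blast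
  have Cx_F: "Cx q r \<in> F q" if "q \<ge> 0" for q r unfolding Cx_def using jCB(1)[OF that Gx[OF that]] .
  have Bx_NS: "Bx q r \<in> NS" if "q \<ge> 0" for q r unfolding Bx_def using jCB(2)[OF that Gx[OF that]] .
  have Cx_eq: "X q \<omega> < r \<longleftrightarrow> \<omega> \<in> Cx q r"
    if "q \<ge> 0" "\<omega> \<in> \<Omega>" "ennreal q < \<tau> \<omega>" "\<omega> \<notin> Bx q r" for q r \<omega>
    using jCB(3)[OF that(1) Gx[OF that(1)] that(2,3)] that(2,4) unfolding Cx_def Bx_def by auto
  define Bn where "Bn = (\<Union>p\<in>Q0\<times>(\<rat>::real set). BR (fst p) \<union> Bx (fst p) (snd p))"
  have Bn_NS: "Bn \<in> NS" unfolding Bn_def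
  proof (rule NS_UN)
    show "countable (Q0 \<times> (\<rat>::real set))" using Q0_countable countable_rat by blast
    fix p assume "p \<in> Q0 \<times> (\<rat>::real set)"
    then have "fst p \<ge> 0" unfolding Q0_def by auto
    then show "BR (fst p) \<union> Bx (fst p) (snd p) \<in> NS" by (intro NS_Un CR(2) Bx_NS)
  qed
  have notBR: "\<omega> \<notin> BR q" if "\<omega> \<notin> Bn" "q \<in> Q0" for \<omega> q
    using that unfolding Bn_def by (auto intro!: bexI[of _ "(q, 0)"])
  have notBx: "\<omega> \<notin> Bx q r" if "\<omega> \<notin> Bn" "q \<in> Q0" "r \<in> \<rat>" for \<omega> q r
    using that unfolding Bn_def by (auto intro!: bexI[of _ "(q, r)"])
  define \<delta> where "\<delta> M = 1/(real M+1)" for M :: nat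
  have \<delta>_pos: "\<delta> M > 0" for M unfolding \<delta>_def by simp
  have \<delta>_mono: "M \<le> M' \<Longrightarrow> \<delta> M' \<le> \<delta> M" for M M' unfolding \<delta>_def by (simp add: divide_left_mono)
  define Ps where "Ps r M = {\<omega>\<in>\<Omega>. \<forall>q\<in>\<rat>. 0 \<le> q \<longrightarrow> Rp \<omega> < ennreal q \<longrightarrow>
       \<not>(0 \<le> q - \<delta> M \<and> Rp \<omega> \<le> ennreal (q - \<delta> M)) \<longrightarrow> \<omega> \<in> Cx q r}" for r M
  define W where "W = (\<Union>r\<in>{r\<in>\<rat>. r < a}. \<Union>M. Ps r M)"
  define Y where "Y t \<omega> = (if Rp \<omega> \<le> ennreal t then (if \<omega> \<in> W then 1 else 0) else (0::real))" for t \<omega>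
  have Ps_mono: "Ps r M \<subseteq> Ps r M'" if "M \<le> M'" for r M M'
  proof
    fix \<omega> assume w: "\<omega> \<in> Ps r M"
    have "\<not>(0 \<le> q - \<delta> M \<and> Rp \<omega> \<le> ennreal (q - \<delta> M))"
      if "\<not>(0 \<le> q - \<delta> M' \<and> Rp \<omega> \<le> ennreal (q - \<delta> M'))" for q
    proof
      assume h: "0 \<le> q - \<delta> M \<and> Rp \<omega> \<le> ennreal (q - \<delta> M)"
      have "q - \<delta> M \<le> q - \<delta> M'" using \<delta>_mono[OF \<open>M \<le> M'\<close>] by simp
      then have "0 \<le> q - \<delta> M' \<and> Rp \<omega> \<le> ennreal (q - \<delta> M')"
        using h by (meson ennreal_leI order_trans)
      then show False using that by blast
    qed
    then show "\<omega> \<in> Ps r M'" using w unfolding Ps_def by blast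
  qed
  have St_F: "{\<omega>\<in>\<Omega>. \<omega> \<in> W \<and> Rp \<omega> \<le> ennreal t} \<in> F t" if t: "t \<ge> 0" for t
  proof (rule rc_lemma[OF t])
    fix K :: nat
    interpret Fk: sigma_algebra \<Omega> "F (t + 1/(real K+1))" using F_sa t by simp
    define Lt where "Lt = {\<omega>\<in>\<Omega>. Rp \<omega> \<le> ennreal t}"
    have Lt_F: "Lt \<in> F t" unfolding Lt_def by (rule Rp_le[OF t])
    have eq: "{\<omega>\<in>\<Omega>. \<omega> \<in> W \<and> Rp \<omega> \<le> ennreal t} = (\<Union>r\<in>{r\<in>\<rat>. r < a}. \<Union>M\<in>{K..}. Ps r M \<inter> Lt)"
    proof (intro set_eqI iffI)
      fix \<omega> assume "\<omega> \<in> {\<omega>\<in>\<Omega>. \<omega> \<in> W \<and> Rp \<omega> \<le> ennreal t}"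
      then obtain r M where "r \<in> {r\<in>\<rat>. r < a}" "\<omega> \<in> Ps r M" "\<omega> \<in> Lt" unfolding W_def Lt_def by blast
      moreover then have "\<omega> \<in> Ps r (max M K)" using Ps_mono[of M "max M K"] by auto
      ultimately show "\<omega> \<in> (\<Union>r\<in>{r\<in>\<rat>. r < a}. \<Union>M\<in>{K..}. Ps r M \<inter> Lt)"
        by (intro UN_I[of r] UN_I[of "max M K"]) auto
    next
      fix \<omega> assume "\<omega> \<in> (\<Union>r\<in>{r\<in>\<rat>. r < a}. \<Union>M\<in>{K..}. Ps r M \<inter> Lt)"
      then show "\<omega> \<in> {\<omega>\<in>\<Omega>. \<omega> \<in> W \<and> Rp \<omega> \<le> ennreal t}" unfolding W_def Lt_def by blast
    qed
    have PsL: "Ps r M \<inter> Lt \<in> F (t + 1/(real K+1))" if "M \<ge> K" for r M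
    proof -
      interpret Fm: sigma_algebra \<Omega> "F (t + \<delta> M)" using F_sa t \<delta>_pos[of M] by simp
      define V where "V q = {\<omega>\<in>\<Omega>. Rp \<omega> < ennreal q \<longrightarrow> \<not>(0 \<le> q - \<delta> M \<and> Rp \<omega> \<le> ennreal (q - \<delta> M)) \<longrightarrow> \<omega> \<in> Cx q r}" for q
      define I where "I = {q\<in>Q0. q \<le> t + \<delta> M}"
      have eq2: "Ps r M \<inter> Lt = Lt \<inter> (\<Inter>q\<in>I. V q)"
      proof (intro set_eqI iffI)
        fix \<omega> assume "\<omega> \<in> Ps r M \<inter> Lt"
        then show "\<omega> \<in> Lt \<inter> (\<Inter>q\<in>I. V q)" unfolding Ps_def V_def I_def Q0_def by blast
      next
        fix \<omega> assume w: "\<omega> \<in> Lt \<inter> (\<Inter>q\<in>I. V q)"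
        have "\<omega> \<in> Cx q r" if q: "q \<in> \<rat>" "0 \<le> q" "Rp \<omega> < ennreal q"
          "\<not>(0 \<le> q - \<delta> M \<and> Rp \<omega> \<le> ennreal (q - \<delta> M))" for q
        proof (cases "q \<le> t + \<delta> M")
          case True then show ?thesis using w q unfolding I_def V_def Q0_def by blast
        next
          case False
          then have "t \<le> q - \<delta> M" by simp
          moreover have "Rp \<omega> \<le> ennreal t" using w unfolding Lt_def by blast
          ultimately have "0 \<le> q - \<delta> M \<and> Rp \<omega> \<le> ennreal (q - \<delta> M)"
            using t by (meson ennreal_leI order_trans)
          then show ?thesis using q by blast
        qed
        then show "\<omega> \<in> Ps r M \<inter> Lt" using w unfolding Ps_def Lt_def by blast
      qed
      have V_F: "V q \<in> F (t + \<delta> M)" if q: "q \<in> I" for q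
      proof -
        have q0: "q \<ge> 0" "q \<le> t + \<delta> M" using q unfolding I_def Q0_def by auto
        have sub: "F q \<subseteq> F (t + \<delta> M)" using q0 by (intro F_mono) auto
        define LL where "LL = (if 0 \<le> q - \<delta> M then {\<omega>\<in>\<Omega>. Rp \<omega> \<le> ennreal (q - \<delta> M)} else {})"
        have LL_F: "LL \<in> F q"
        proof (cases "0 \<le> q - \<delta> M")
          case True
          then have "{\<omega>\<in>\<Omega>. Rp \<omega> \<le> ennreal (q - \<delta> M)} \<in> F (q - \<delta> M)" by (rule Rp_le)
          moreover have "F (q - \<delta> M) \<subseteq> F q" using True \<delta>_pos[of M] by (intro F_mono) auto
          ultimately show ?thesis unfolding LL_def using True by auto
        next
          case False
          interpret Fq: sigma_algebra \<Omega> "F q" using F_sa q0 by simp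
          show ?thesis unfolding LL_def using False by simp
        qed
        have "V q = (\<Omega> - {\<omega>\<in>\<Omega>. Rp \<omega> < ennreal q}) \<union> LL \<union> Cx q r"
          unfolding V_def LL_def using F_Pow[OF q0(1) Cx_F[OF q0(1)]] by auto
        moreover have "\<Omega> - {\<omega>\<in>\<Omega>. Rp \<omega> < ennreal q} \<in> F (t + \<delta> M)" using Rp_less[OF q0(1)] sub by blast
        moreover have "LL \<in> F (t + \<delta> M)" using LL_F sub by blast
        moreover have "Cx q r \<in> F (t + \<delta> M)" using Cx_F[OF q0(1)] sub by blast
        ultimately show ?thesis by (simp add: Fm.Un)
      qed
      have "(\<Inter>q\<in>I. V q) \<in> F (t + \<delta> M)"
      proof (rule Fm.countable_INT')
        show "countable I" unfolding I_def by (rule countable_subset[OF _ Q0_countable]) auto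
        show "I \<noteq> {}" unfolding I_def Q0_def using t \<delta>_pos[of M] by (intro ex_in_conv[THEN iffD1] exI[of _ 0]) auto
      qed (use V_F in blast)
      moreover have "Lt \<in> F (t + \<delta> M)" using Lt_F F_mono[of t "t + \<delta> M"] t \<delta>_pos[of M] by auto
      ultimately have "Ps r M \<inter> Lt \<in> F (t + \<delta> M)" unfolding eq2 by blast
      moreover have "F (t + \<delta> M) \<subseteq> F (t + 1/(real K+1))"
        using t \<delta>_mono[OF that] \<delta>_pos[of M] unfolding \<delta>_def by (intro F_mono) auto
      ultimately show ?thesis by blast
    qed
    show "{\<omega>\<in>\<Omega>. \<omega> \<in> W \<and> Rp \<omega> \<le> ennreal t} \<in> F (t + 1/(real K+1))"
      unfolding eq
    proof (intro Fk.countable_UN'')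
      show "countable {r\<in>\<rat>. r < a}" by (rule countable_subset[OF _ countable_rat]) auto
    qed (use PsL in auto)
  qed
  have Y_ad: "adapted \<Omega> F Y" unfolding adapted_def
  proof (intro allI impI ballI)
    fix t :: real and B :: "real set" assume t: "t \<ge> 0" and "B \<in> sets borel"
    interpret Ft: sigma_algebra \<Omega> "F t" using F_sa t by simp
    define St where "St = {\<omega>\<in>\<Omega>. \<omega> \<in> W \<and> Rp \<omega> \<le> ennreal t}"
    have "{\<omega>\<in>\<Omega>. Y t \<omega> \<in> B} = (if 1 \<in> B then St else {}) \<union> (if 0 \<in> B then \<Omega> - St else {})"
      unfolding St_def Y_def by auto
    moreover have "St \<in> F t" unfolding St_def by (rule St_F[OF t])
    ultimately show "{\<omega>\<in>\<Omega>. Y t \<omega> \<in> B} \<in> F t" by auto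
  qed
  have Y_c: "\<forall>\<omega>\<in>\<Omega>. cadlag (\<lambda>t. Y t \<omega>)" unfolding Y_def by (intro ballI cadlag_step)
  have Y_opt: "optional_process \<Omega> F Y" unfolding optional_process_def optional_sigma_def
    using Y_ad Y_c by (intro ballI sigma_sets.Basic) blast
  define S where "S = {\<omega>\<in>\<Omega>. (if R \<omega> < \<infinity> then Y (enn2real (R \<omega>)) \<omega> else 0) \<in> {1}}"
  have S_in: "S \<in> sigma_at \<Omega> F R" unfolding S_def sigma_at_def
    using Y_opt borel_closed[OF closed_singleton, of "1::real"] by (intro sigma_sets.Basic) blast
  define E where "E = {\<omega>\<in>\<Omega>. R \<omega> < \<infinity> \<and> X (enn2real (R \<omega>)) \<omega> \<in> {..<a}}"
  have pw: "\<omega> \<in> S \<longleftrightarrow> \<omega> \<in> E" if w: "\<omega> \<in> Dset" "\<omega> \<notin> Bn" for \<omega>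
  proof -
    have w1: "\<omega> \<in> \<Omega>" "R \<omega> < \<tau> \<omega>" using w unfolding Dset_def by auto
    obtain x where x: "0 \<le> x" "R \<omega> = ennreal x" using w1(2) by (cases "R \<omega>") auto
    have Rp: "Rp \<omega> = ennreal x" using Rp_eq[OF w1] notBR[OF w(2)] x by simp
    have eR: "enn2real (R \<omega>) = x" using x by simp
    have "\<omega> \<in> S \<longleftrightarrow> \<omega> \<in> W" unfolding S_def Y_def using w1 x Rp eR by simp
    also have "\<dots> \<longleftrightarrow> (\<exists>r\<in>\<rat>. r < a \<and> (\<exists>M. \<omega> \<in> Ps r M))" unfolding W_def by blast
    also have "\<dots> \<longleftrightarrow> (\<exists>r\<in>\<rat>. r < a \<and> (\<exists>M::nat. \<forall>q\<in>\<rat>. x < q \<longrightarrow> q < x + 1/(real M+1) \<longrightarrow> \<omega> \<in> Cx q r))"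
    proof -
      have c: "(0 \<le> q \<and> ennreal x < ennreal q \<and> \<not>(0 \<le> q - \<delta> M \<and> ennreal x \<le> ennreal (q - \<delta> M)))
          \<longleftrightarrow> (x < q \<and> q < x + 1/(real M+1))" for q M
      proof -
        have "ennreal x < ennreal q \<longleftrightarrow> x < q" using x(1) by (rule ennreal_less_iff)
        moreover have "(0 \<le> q - \<delta> M \<and> ennreal x \<le> ennreal (q - \<delta> M)) \<longleftrightarrow> (0 \<le> q - \<delta> M \<and> x \<le> q - \<delta> M)"
          by auto
        ultimately show ?thesis using x(1) unfolding \<delta>_def by auto
      qed
      have c2: "(0 \<le> q \<longrightarrow> ennreal x < ennreal q \<longrightarrow> \<not>(0 \<le> q - \<delta> M \<and> ennreal x \<le> ennreal (q - \<delta> M)) \<longrightarrow> P)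
          \<longleftrightarrow> (x < q \<longrightarrow> q < x + 1/(real M+1) \<longrightarrow> P)" for q M P
        using c[of q M] by blast
      have Ps_iff: "\<omega> \<in> Ps r M \<longleftrightarrow> (\<forall>q\<in>\<rat>. 0 \<le> q \<longrightarrow> ennreal x < ennreal q \<longrightarrow>
          \<not>(0 \<le> q - \<delta> M \<and> ennreal x \<le> ennreal (q - \<delta> M)) \<longrightarrow> \<omega> \<in> Cx q r)" for r :: real and M
        using w1(1) unfolding Ps_def by (simp only: Rp mem_Collect_eq simp_thms)
      have "\<omega> \<in> Ps r M \<longleftrightarrow> (\<forall>q\<in>\<rat>. x < q \<longrightarrow> q < x + 1/(real M+1) \<longrightarrow> \<omega> \<in> Cx q r)" for r :: real and M
        unfolding Ps_iff c2 ..
      then show ?thesis by simp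
    qed
    also have "\<dots> \<longleftrightarrow> X x \<omega> < a"
    proof (rule rc_char[symmetric, where g = "\<lambda>s. X s \<omega>" and w = "\<tau> \<omega>"])
      show "((\<lambda>s. X s \<omega>) \<longlongrightarrow> X x \<omega>) (at_right x)" using cX w1(1) x(1) unfolding cadlag_def by blast
      show "ennreal x < \<tau> \<omega>" using w1(2) x by simp
      fix q r :: real assume q: "q \<in> \<rat>" "r \<in> \<rat>" "x < q" "ennreal q < \<tau> \<omega>"
      then have "q \<in> Q0" using x unfolding Q0_def by simp
      then show "\<omega> \<in> Cx q r \<longleftrightarrow> X q \<omega> < r"
        using Cx_eq[of q \<omega> r] notBx[OF w(2) _ q(2)] q w1(1) unfolding Q0_def by auto
    qed
    also have "\<dots> \<longleftrightarrow> \<omega> \<in> E" unfolding E_def using w1 x eR by simp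
    finally show ?thesis .
  qed
  interpret Hs: sigma_algebra \<Omega> H by (rule H_sa)
  have Bn_H: "Bn \<in> H" unfolding H_def sjoin_def using NS_in_nullsigma[OF Bn_NS] by blast
  have EB_H: "E \<inter> Bn \<in> H" unfolding H_def sjoin_def using NS_in_nullsigma[OF Bn_NS, of "E \<inter> Bn"] by blast
  have S_H: "S \<in> H" unfolding H_def sjoin_def using S_in by blast
  have "(S \<inter> (\<Omega> - Bn)) \<union> (E \<inter> Bn) \<in> H" using Bn_H EB_H S_H by blast
  moreover have "Dset \<inter> E = Dset \<inter> ((S \<inter> (\<Omega> - Bn)) \<union> (E \<inter> Bn))"
    using pw unfolding Dset_def by blast
  ultimately show ?thesis unfolding E_def by blast
qed

end


lemma sets_borel_Iio: "sets (borel :: real measure) = sigma_sets UNIV (range lessThan)"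
  by (subst borel_Iio) (rule sets_measure_of, simp)

context setting2
begin

definition "P1 A \<longleftrightarrow> (\<exists>A'\<in>H. Dset \<inter> A = Dset \<inter> A')"

lemma Dset_sub: "Dset \<subseteq> \<Omega>" unfolding Dset_def by blast
lemma Dset_fin: "\<omega> \<in> Dset \<Longrightarrow> R \<omega> < \<infinity>" unfolding Dset_def by (auto intro: less_le_trans)

lemma H_empty: "{} \<in> H" unfolding H_def sjoin_def by (rule sigma_sets.Empty)

lemma P1_empty: "P1 {}" unfolding P1_def using H_empty by blast

lemma P1_compl:
  assumes "P1 A" shows "P1 (\<Omega> - A)"
proof -
  obtain A' where "A' \<in> H" "Dset \<inter> A = Dset \<inter> A'" using assms unfolding P1_def by blast
  moreover have "\<Omega> - A' \<in> H" using \<open>A' \<in> H\<close> unfolding H_def sjoin_def by (rule sigma_sets.Compl)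
  ultimately show ?thesis unfolding P1_def using Dset_sub by (intro bexI[of _ "\<Omega> - A'"]) blast+
qed

lemma P1_UN:
  assumes "\<And>i::nat. P1 (A i)" shows "P1 (\<Union>i. A i)"
proof -
  obtain f where f: "\<And>i. f i \<in> H" "\<And>i. Dset \<inter> A i = Dset \<inter> f i" using assms unfolding P1_def by metis
  have "(\<Union>i. f i) \<in> H" using f(1) unfolding H_def sjoin_def by (rule sigma_sets.Union)
  moreover have "Dset \<inter> (\<Union>i. A i) = Dset \<inter> (\<Union>i. f i)" using f(2) by blast
  ultimately show ?thesis unfolding P1_def by blast
qed

lemma P1_cong: "P1 A \<Longrightarrow> Dset \<inter> A = Dset \<inter> B \<Longrightarrow> P1 B"
  unfolding P1_def by metis

lemma secB:
  assumes adX: "adapted \<Omega> (Gfilt Q F \<tau>) X" and cX: "\<forall>\<omega>\<in>\<Omega>. cadlag (\<lambda>t. X t \<omega>)"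
    and B: "B \<in> sets (borel :: real measure)"
  shows "P1 {\<omega>\<in>\<Omega>. R \<omega> < \<infinity> \<and> X (enn2real (R \<omega>)) \<omega> \<in> B}"
  using B[unfolded sets_borel_Iio]
proof (rule sigma_sets_prop[where P = "\<lambda>B. P1 {\<omega>\<in>\<Omega>. R \<omega> < \<infinity> \<and> X (enn2real (R \<omega>)) \<omega> \<in> B}"])
  fix C :: "real set" assume "C \<in> range lessThan"
  then obtain a where "C = {..<a}" by blast
  then show "P1 {\<omega>\<in>\<Omega>. R \<omega> < \<infinity> \<and> X (enn2real (R \<omega>)) \<omega> \<in> C}"
    using core[OF adX cX, of a] unfolding P1_def by simp
next
  show "P1 {\<omega>\<in>\<Omega>. R \<omega> < \<infinity> \<and> X (enn2real (R \<omega>)) \<omega> \<in> {}}" using P1_empty by simp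
next
  fix C :: "real set" assume "P1 {\<omega>\<in>\<Omega>. R \<omega> < \<infinity> \<and> X (enn2real (R \<omega>)) \<omega> \<in> C}"
  then have "P1 (\<Omega> - {\<omega>\<in>\<Omega>. R \<omega> < \<infinity> \<and> X (enn2real (R \<omega>)) \<omega> \<in> C})" by (rule P1_compl)
  then show "P1 {\<omega>\<in>\<Omega>. R \<omega> < \<infinity> \<and> X (enn2real (R \<omega>)) \<omega> \<in> UNIV - C}"
    by (rule P1_cong) (use Dset_fin in blast)
next
  fix A :: "nat \<Rightarrow> real set"
  assume "\<And>i. P1 {\<omega>\<in>\<Omega>. R \<omega> < \<infinity> \<and> X (enn2real (R \<omega>)) \<omega> \<in> A i}"
  then have "P1 (\<Union>i. {\<omega>\<in>\<Omega>. R \<omega> < \<infinity> \<and> X (enn2real (R \<omega>)) \<omega> \<in> A i})" by (rule P1_UN)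
  then show "P1 {\<omega>\<in>\<Omega>. R \<omega> < \<infinity> \<and> X (enn2real (R \<omega>)) \<omega> \<in> (\<Union>i. A i)}"
    by (rule P1_cong) blast
qed

definition "sec U = {\<omega>\<in>\<Omega>. R \<omega> < \<infinity> \<and> (enn2real (R \<omega>), \<omega>) \<in> U}"

lemma secU:
  assumes "U \<in> optional_sigma \<Omega> (Gfilt Q F \<tau>)"
  shows "P1 (sec U)"
  using assms[unfolded optional_sigma_def]
proof (rule sigma_sets_prop[where P = "\<lambda>U. P1 (sec U)"])
  fix C assume "C \<in> {{(t, \<omega>) \<in> {0..} \<times> \<Omega>. X t \<omega> \<in> B} | X B.
        adapted \<Omega> (Gfilt Q F \<tau>) X \<and> (\<forall>\<omega>\<in>\<Omega>. cadlag (\<lambda>t. X t \<omega>)) \<and> B \<in> sets (borel :: real measure)}"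
  then obtain X B where XB: "C = {(t, \<omega>) \<in> {0..} \<times> \<Omega>. X t \<omega> \<in> B}" "adapted \<Omega> (Gfilt Q F \<tau>) X"
    "\<forall>\<omega>\<in>\<Omega>. cadlag (\<lambda>t. X t \<omega>)" "B \<in> sets (borel :: real measure)" by blast
  have "sec C = {\<omega>\<in>\<Omega>. R \<omega> < \<infinity> \<and> X (enn2real (R \<omega>)) \<omega> \<in> B}"
    unfolding sec_def XB(1) by auto
  then show "P1 (sec C)" using secB[OF XB(2-4)] by simp
next
  show "P1 (sec {})" unfolding sec_def using P1_empty by simp
next
  fix C assume "P1 (sec C)"
  then have "P1 (\<Omega> - sec C)" by (rule P1_compl)
  then show "P1 (sec ({0..} \<times> \<Omega> - C))"
    by (rule P1_cong) (use Dset_fin in \<open>auto simp: sec_def\<close>)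
next
  fix A :: "nat \<Rightarrow> (real \<times> 'a) set"
  assume "\<And>i. P1 (sec (A i))"
  then have "P1 (\<Union>i. sec (A i))" by (rule P1_UN)
  then show "P1 (sec (\<Union>i. A i))" by (rule P1_cong) (auto simp: sec_def)
qed

lemma subset1: "trace_on Dset (sigma_at \<Omega> (Gfilt Q F \<tau>) R) \<subseteq> trace_on Dset H"
proof
  fix Z assume "Z \<in> trace_on Dset (sigma_at \<Omega> (Gfilt Q F \<tau>) R)"
  then obtain A where A: "A \<in> sigma_at \<Omega> (Gfilt Q F \<tau>) R" "Z = Dset \<inter> A" unfolding trace_on_def by blast
  have "P1 A" using A(1)[unfolded sigma_at_def]
  proof (rule sigma_sets_prop[where P = P1])
    fix C assume "C \<in> {{\<omega>\<in>\<Omega>. (if R \<omega> < \<infinity> then Y (enn2real (R \<omega>)) \<omega> else 0) \<in> B} | Y B.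
        optional_process \<Omega> (Gfilt Q F \<tau>) Y \<and> B \<in> sets (borel :: real measure)}"
    then obtain Y B where YB: "C = {\<omega>\<in>\<Omega>. (if R \<omega> < \<infinity> then Y (enn2real (R \<omega>)) \<omega> else 0) \<in> B}"
      "optional_process \<Omega> (Gfilt Q F \<tau>) Y" "B \<in> sets (borel :: real measure)" by blast
    have U: "{(t, \<omega>) \<in> {0..} \<times> \<Omega>. Y t \<omega> \<in> B} \<in> optional_sigma \<Omega> (Gfilt Q F \<tau>)"
      using YB(2,3) unfolding optional_process_def by blast
    show "P1 C" using secU[OF U]
      by (rule P1_cong) (use Dset_fin in \<open>auto simp: sec_def YB(1)\<close>)
  qed (use P1_empty P1_compl P1_UN in auto)
  then obtain A' where "A' \<in> H" "Dset \<inter> A = Dset \<inter> A'" unfolding P1_def by blast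
  then show "Z \<in> trace_on Dset H" unfolding trace_on_def A(2) by blast
qed


lemma G_sa: "sigma_algebra \<Omega> (Gfilt Q F \<tau> t)"
proof -
  define s where "s = max (t+1) 0"
  have s: "s \<in> {t<..}" "s \<ge> 0" unfolding s_def by auto
  have "(\<Inter>s\<in>{t<..}. sjoin \<Omega> (F s) (sigma_rv \<Omega> (\<lambda>\<omega>. min (\<tau> \<omega>) (ennreal s)))) \<subseteq> Pow \<Omega>"
  proof
    fix C assume "C \<in> (\<Inter>s\<in>{t<..}. sjoin \<Omega> (F s) (sigma_rv \<Omega> (\<lambda>\<omega>. min (\<tau> \<omega>) (ennreal s))))"
    then have "C \<in> sjoin \<Omega> (F s) (sigma_rv \<Omega> (\<lambda>\<omega>. min (\<tau> \<omega>) (ennreal s)))"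
      using s(1) by (rule INT_D)
    then have C: "C \<in> sigma_sets \<Omega> (F s \<union> sigma_rv \<Omega> (\<lambda>\<omega>. min (\<tau> \<omega>) (ennreal s)))"
      unfolding sjoin_def .
    have "F s \<union> sigma_rv \<Omega> (\<lambda>\<omega>. min (\<tau> \<omega>) (ennreal s)) \<subseteq> Pow \<Omega>"
      using F_Pow[OF s(2)] sigma_rv_Pow by blast
    then show "C \<in> Pow \<Omega>" using sigma_sets_into_sp[OF _ C] by blast
  qed
  then have "nullsigma Q T \<union> (\<Inter>s\<in>{t<..}. sjoin \<Omega> (F s) (sigma_rv \<Omega> (\<lambda>\<omega>. min (\<tau> \<omega>) (ennreal s)))) \<subseteq> Pow \<Omega>"
    using nullsigma_Pow by blast
  then show ?thesis unfolding Gfilt_eq by (rule sigma_algebra_sigma_sets)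
qed

lemma F_sub_G: "t \<ge> 0 \<Longrightarrow> F t \<subseteq> Gfilt Q F \<tau> t"
proof
  fix C assume t: "t \<ge> 0" and C: "C \<in> F t"
  have "C \<in> sjoin \<Omega> (F s) (sigma_rv \<Omega> (\<lambda>\<omega>. min (\<tau> \<omega>) (ennreal s)))" if "s > t" for s
    using F_mono[of t s] t that C unfolding sjoin_def by (intro sigma_sets.Basic) auto
  then show "C \<in> Gfilt Q F \<tau> t" unfolding Gfilt_eq by (intro sigma_sets.Basic) blast
qed

lemma null_sub_G: "nullsigma Q T \<subseteq> Gfilt Q F \<tau> t"
  unfolding Gfilt_eq by blast

lemma sigma_at_mono: "sigma_at \<Omega> F R \<subseteq> sigma_at \<Omega> (Gfilt Q F \<tau>) R"
proof -
  have ad: "adapted \<Omega> (Gfilt Q F \<tau>) X" if "adapted \<Omega> F X" for X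
    using that F_sub_G unfolding adapted_def by blast
  have os: "optional_sigma \<Omega> F \<subseteq> optional_sigma \<Omega> (Gfilt Q F \<tau>)"
    unfolding optional_sigma_def by (rule sigma_sets_mono') (use ad in blast)
  have op: "optional_process \<Omega> (Gfilt Q F \<tau>) Y" if "optional_process \<Omega> F Y" for Y
    using that os unfolding optional_process_def by blast
  show ?thesis unfolding sigma_at_def by (rule sigma_sets_mono') (use op in blast)
qed

definition "P2 A \<longleftrightarrow> (\<exists>A'\<in>sigma_at \<Omega> (Gfilt Q F \<tau>) R. Dset \<inter> A = Dset \<inter> A')"

lemma subset2: "trace_on Dset H \<subseteq> trace_on Dset (sigma_at \<Omega> (Gfilt Q F \<tau>) R)"
proof
  fix Z assume "Z \<in> trace_on Dset H"
  then obtain A where A: "A \<in> H" "Z = Dset \<inter> A" unfolding trace_on_def by blast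
  have "P2 A" using A(1)[unfolded H_def sjoin_def]
  proof (rule sigma_sets_prop[where P = P2])
    fix C assume "C \<in> nullsigma Q T \<union> sigma_at \<Omega> F R"
    then show "P2 C"
    proof
      assume "C \<in> sigma_at \<Omega> F R" then show ?thesis unfolding P2_def using sigma_at_mono by blast
    next
      assume C: "C \<in> nullsigma Q T"
      define Y where "Y t \<omega> = (if 0 \<le> ennreal t then (if \<omega> \<in> C then 1 else 0) else (0::real))" for t \<omega>
      have CO: "C \<subseteq> \<Omega>" using C nullsigma_Pow by blast
      have ad: "adapted \<Omega> (Gfilt Q F \<tau>) Y" unfolding adapted_def
      proof (intro allI impI ballI)
        fix t :: real and B :: "real set"
        interpret Gt: sigma_algebra \<Omega> "Gfilt Q F \<tau> t" by (rule G_sa)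
        have "C \<in> Gfilt Q F \<tau> t" using C null_sub_G by blast
        moreover have "{\<omega>\<in>\<Omega>. Y t \<omega> \<in> B} = (if 1 \<in> B then C else {}) \<union> (if 0 \<in> B then \<Omega> - C else {})"
          unfolding Y_def using CO by auto
        ultimately show "{\<omega>\<in>\<Omega>. Y t \<omega> \<in> B} \<in> Gfilt Q F \<tau> t" by auto
      qed
      have cd: "\<forall>\<omega>\<in>\<Omega>. cadlag (\<lambda>t. Y t \<omega>)" unfolding Y_def by (intro ballI cadlag_step)
      have op: "optional_process \<Omega> (Gfilt Q F \<tau>) Y" unfolding optional_process_def optional_sigma_def
        using ad cd by (intro ballI sigma_sets.Basic) blast
      define S where "S = {\<omega>\<in>\<Omega>. (if R \<omega> < \<infinity> then Y (enn2real (R \<omega>)) \<omega> else 0) \<in> {1}}"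
      have "S \<in> sigma_at \<Omega> (Gfilt Q F \<tau>) R" unfolding S_def sigma_at_def
        using op borel_closed[OF closed_singleton, of "1::real"] by (intro sigma_sets.Basic) blast
      moreover have "Dset \<inter> C = Dset \<inter> S" unfolding S_def Y_def using Dset_fin Dset_sub by auto
      ultimately show ?thesis unfolding P2_def by blast
    qed
  next
    show "P2 {}" unfolding P2_def sigma_at_def by (intro bexI[of _ "{}"] sigma_sets.Empty) auto
  next
    fix C assume "P2 C"
    then obtain A' where A': "A' \<in> sigma_at \<Omega> (Gfilt Q F \<tau>) R" "Dset \<inter> C = Dset \<inter> A'" unfolding P2_def by blast
    have "\<Omega> - A' \<in> sigma_at \<Omega> (Gfilt Q F \<tau>) R" using A'(1) unfolding sigma_at_def by (rule sigma_sets.Compl)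
    with A'(2) show "P2 (\<Omega> - C)" unfolding P2_def using Dset_sub by (intro bexI[of _ "\<Omega> - A'"]) blast+
  next
    fix A :: "nat \<Rightarrow> 'a set" assume "\<And>i. P2 (A i)"
    then obtain f where f: "\<And>i. f i \<in> sigma_at \<Omega> (Gfilt Q F \<tau>) R" "\<And>i. Dset \<inter> A i = Dset \<inter> f i"
      unfolding P2_def by metis
    have "(\<Union>i. f i) \<in> sigma_at \<Omega> (Gfilt Q F \<tau>) R" using f(1) unfolding sigma_at_def by (rule sigma_sets.Union)
    moreover have "Dset \<inter> (\<Union>i. A i) = Dset \<inter> (\<Union>i. f i)" using f(2) by blast
    ultimately show "P2 (\<Union>i. A i)" unfolding P2_def by blast
  qed
  then obtain A' where "A' \<in> sigma_at \<Omega> (Gfilt Q F \<tau>) R" "Dset \<inter> A = Dset \<inter> A'" unfolding P2_def by blast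
  then show "Z \<in> trace_on Dset (sigma_at \<Omega> (Gfilt Q F \<tau>) R)" unfolding trace_on_def A(2) by blast
qed

lemma main_expanded:
  "trace_on {\<omega>\<in>\<Omega>. R \<omega> < \<tau> \<omega>} (sigma_at \<Omega> (Gfilt Q F \<tau>) R)
   = trace_on {\<omega>\<in>\<Omega>. R \<omega> < \<tau> \<omega>} (sjoin \<Omega> (nullsigma Q (sjoin \<Omega> (sigma_rv \<Omega> \<tau>) (Finf \<Omega> F))) (sigma_at \<Omega> F R))"
proof -
  have "trace_on Dset (sigma_at \<Omega> (Gfilt Q F \<tau>) R) = trace_on Dset H"
    using subset1 subset2 by (rule antisym)
  then show ?thesis unfolding Dset_def H_def T_def .
qed

end

theorem mainTheorem10:
  fixes Q :: "'a measure" and F :: "real \<Rightarrow> 'a set set"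
    and \<tau> :: "'a \<Rightarrow> ennreal" and R :: "'a \<Rightarrow> ennreal"
  assumes "prob_space Q"
    and "is_filtration Q F"
    and "right_continuous_filtration F"
    and "nullsigma Q (Finf (space Q) F) \<subseteq> F 0"
    and "\<tau> \<in> borel_measurable Q"
    and "is_stopping_time (space Q) (Gfilt Q F \<tau>) R"
  shows "trace_on {\<omega>\<in>space Q. R \<omega> < \<tau> \<omega>} (sigma_at (space Q) (Gfilt Q F \<tau>) R)
       = trace_on {\<omega>\<in>space Q. R \<omega> < \<tau> \<omega>}
           (sjoin (space Q)
              (nullsigma Q (sjoin (space Q) (sigma_rv (space Q) \<tau>) (Finf (space Q) F)))
              (sigma_at (space Q) F R))"
proof -
  interpret setting2 Q F \<tau> R
    unfolding setting2_def setting_def setting2_axioms_def using assms by blast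
  show ?thesis by (rule main_expanded)
qed


end
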